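(* Let $1\le j\le d$, let $\bm{x}_1,\dots,\bm{x}_{j+1}\in\mathbb{R}^d$ be affinely independent, let $\rho\in\mathbb{R}$, let $\bm{k}\in\mathbb{R}^d$, and set $\sigma_t=\bm{k}\cdot\bm{x}_t$, assumed pairwise distinct. Define $$S_t=\frac{e^{-i\sigma_t}}{\prod_{l=1,\,l\neq t}^{j+1}(\sigma_t-\sigma_l)},\qquad S=\sum_{t=1}^{j+1}S_t,$$ let $\hat B$ be the $(j+2)\times(j+2)$ Cayley–Menger matrix whose first row and first column are $(0,1,\dots,1)$ and whose entry in row $s+1$, column $t+1$ is $\|\bm{x}_s-\bm{x}_t\|^2$ ($1\le s,t\le j+1$), let $\gamma=\sqrt{(-1)^{j+1}\det(\hat B)/2^j}$ (equivalently $\gamma=j!$ times the $j$-dimensional content of the simplex), and let $$F(\bm{k})=\rho\, i^j\,\gamma\, S .$$ Then for each $p\in\{1,\dots,j+1\}$, $$\frac{\partial F(\bm{k})}{\partial \bm{x}_p}=\rho\, i^j\left(\Lambda\,\bm{k}+\Gamma\sum_{\substack{m=1\\ m\neq p}}^{j+1}A_{pm}\bm{D}_{pm}\right),$$ where $\bm{D}_{pm}=2(\bm{x}_p-\bm{x}_m)$, $A_{pm}$ is the entry of $\mathrm{adj}(\hat B)$ in the $p$-th row and $m$-th column when rows and columns are indexed starting from $0$ (i.e. the $(p+1)$-th row and $(m+1)$-th column in $1$-based indexing), $$\Lambda=\gamma\left(-i\,S_p+\sum_{t=1,\,t\neq p}^{j+1}\frac{S_t+S_p}{\sigma_t-\sigma_p}\right),\qquad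 \Gamma=\frac{(-1)^{j+1}/2^j}{\gamma}\,S .$$
   Context: $i$ is the imaginary unit. $F(\bm{k})$ is the non-uniform Fourier transform, at frequency $\bm{k}$, of the piecewise-constant function equal to $\rho$ on the $j$-simplex $\mathrm{conv}\{\bm{x}_1,\dots,\bm{x}_{j+1}\}$ and $0$ elsewhere; $\gamma$ is the content distortion factor (ratio of the simplex content to the content $1/j!$ of the unit orthogonal simplex). Derivatives with respect to $\bm{x}_p\in\mathbb{R}^d$ are gradient vectors in $\mathbb{C}^d$. *)

theory Defs
  imports "HOL-Analysis.Analysis" "Jordan_Normal_Form.Determinant"
begin

text \<open>Vertices are indexed x 1, ..., x (j+1); points live in a Euclidean space of dimension DIM('a) = d.\<close>

definition sig :: "'a::euclidean_space \<Rightarrow> (nat \<Rightarrow> 'a) \<Rightarrow> nat \<Rightarrow> real" where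
  "sig k x t = k \<bullet> x t"

definition S_term :: "'a::euclidean_space \<Rightarrow> (nat \<Rightarrow> 'a) \<Rightarrow> nat \<Rightarrow> nat \<Rightarrow> complex" where
  "S_term k x j t = exp (- \<i> * complex_of_real (sig k x t)) /
      (\<Prod>l\<in>{1..j+1} - {t}. complex_of_real (sig k x t - sig k x l))"

definition S_sum :: "'a::euclidean_space \<Rightarrow> (nat \<Rightarrow> 'a) \<Rightarrow> nat \<Rightarrow> complex" where
  "S_sum k x j = (\<Sum>t\<in>{1..j+1}. S_term k x j t)"

definition cayley_menger :: "(nat \<Rightarrow> 'a::euclidean_space) \<Rightarrow> nat \<Rightarrow> real mat" where
  "cayley_menger x j = mat (j+2) (j+2) (\<lambda>(a,b).
      if a = 0 \<and> b = 0 then 0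
      else if a = 0 \<or> b = 0 then 1
      else (norm (x a - x b))^2)"

definition content_gamma :: "(nat \<Rightarrow> 'a::euclidean_space) \<Rightarrow> nat \<Rightarrow> real" where
  "content_gamma x j = sqrt ((-1)^(j+1) * det (cayley_menger x j) / 2^j)"

definition simplex_FT :: "real \<Rightarrow> 'a::euclidean_space \<Rightarrow> (nat \<Rightarrow> 'a) \<Rightarrow> nat \<Rightarrow> complex" where
  "simplex_FT \<rho> k x j = complex_of_real \<rho> * \<i>^j * complex_of_real (content_gamma x j) * S_sum k x j"

end

theory Submission
  imports Defs
begin

lemma cofactor_row_indep:
  assumes "A \<in> carrier_mat n n" "B \<in> carrier_mat n n"
    and "\<And>a b. a < n \<Longrightarrow> b < n \<Longrightarrow> a \<noteq> i \<Longrightarrow> A $$ (a,b) = B $$ (a,b)"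
  shows "cofactor A i c = cofactor B i c"
proof -
  have "mat_delete A i c = mat_delete B i c"
    using assms unfolding mat_delete_def by (intro eq_matI) auto
  then show ?thesis unfolding cofactor_def by simp
qed

lemma det_mat_expand:
  "det (mat n n g :: 'a::comm_ring_1 mat) = (\<Sum>p\<in>{p. p permutes {0..<n}}. signof p * (\<Prod>i=0..<n. g (i, p i)))"
proof -
  have "det (mat n n g) = (\<Sum>p\<in>{p. p permutes {0..<n}}. signof p * (\<Prod>i=0..<n. mat n n g $$ (i, p i)))"
    by (rule det_def') simp
  also have "\<dots> = (\<Sum>p\<in>{p. p permutes {0..<n}}. signof p * (\<Prod>i=0..<n. g (i, p i)))"
  proof (intro sum.cong refl arg_cong2[where f="(*)"] prod.cong)
    fix p i assume "p \<in> {p. p permutes {0..<n}}" "i \<in> {0..<n}"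
    then show "mat n n g $$ (i, p i) = g (i, p i)"
      by (simp add: permutes_in_image)
  qed
  finally show ?thesis .
qed

lemma det_has_derivative:
  fixes f :: "nat \<Rightarrow> nat \<Rightarrow> 'v::real_normed_vector \<Rightarrow> real"
  assumes "\<And>a b. a < n \<Longrightarrow> b < n \<Longrightarrow> (f a b has_derivative f' a b) (at y0 within S)"
  shows "((\<lambda>y. det (mat n n (\<lambda>(a,b). f a b y))) has_derivative
     (\<lambda>h. \<Sum>a<n. \<Sum>b<n. f' a b h * cofactor (mat n n (\<lambda>(a,b). f a b y0)) a b)) (at y0 within S)"
proof -
  let ?P = "{p. p permutes {0..<n}}"
  let ?A0 = "mat n n (\<lambda>(a,b). f a b y0)"
  have e: "(\<lambda>y. det (mat n n (\<lambda>(a,b). f a b y))) = (\<lambda>y. \<Sum>p\<in>?P. signof p * (\<Prod>i=0..<n. f i (p i) y))"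
    by (simp add: det_mat_expand)
  have D: "((\<lambda>y. \<Sum>p\<in>?P. signof p * (\<Prod>i=0..<n. f i (p i) y)) has_derivative
     (\<lambda>h. \<Sum>p\<in>?P. signof p * (\<Sum>i\<in>{0..<n}. f' i (p i) h * (\<Prod>l\<in>{0..<n}-{i}. f l (p l) y0)))) (at y0 within S)"
    apply (intro has_derivative_sum has_derivative_mult_right has_derivative_prod)
    using assms by (simp add: permutes_in_image)
  have eq: "(\<Sum>p\<in>?P. signof p * (\<Sum>i\<in>{0..<n}. f' i (p i) h * (\<Prod>l\<in>{0..<n}-{i}. f l (p l) y0)))
     = (\<Sum>a<n. \<Sum>b<n. f' a b h * cofactor ?A0 a b)" for h
  proof -
    have row: "(\<Sum>p\<in>?P. signof p * (f' i (p i) h * (\<Prod>l\<in>{0..<n}-{i}. f l (p l) y0)))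
        = (\<Sum>b<n. f' i b h * cofactor ?A0 i b)" if i: "i < n" for i
    proof -
      define R where "R = mat n n (\<lambda>(a,b). if a = i then f' i b h else f a b y0)"
      have "det R = (\<Sum>p\<in>?P. signof p * (\<Prod>l=0..<n. (if l = i then f' i (p l) h else f l (p l) y0)))"
        unfolding R_def det_mat_expand by simp
      also have "\<dots> = (\<Sum>p\<in>?P. signof p * (f' i (p i) h * (\<Prod>l\<in>{0..<n}-{i}. f l (p l) y0)))"
      proof (intro sum.cong refl arg_cong2[where f="(*)"])
        fix p
        have "(\<Prod>l=0..<n. (if l = i then f' i (p l) h else f l (p l) y0)) =
          (if i = i then f' i (p i) h else f i (p i) y0) * (\<Prod>l\<in>{0..<n}-{i}. (if l = i then f' i (p l) h else f l (p l) y0))"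
          using i by (intro prod.remove) auto
        also have "\<dots> = f' i (p i) h * (\<Prod>l\<in>{0..<n}-{i}. f l (p l) y0)"
          by simp
        finally show "(\<Prod>l=0..<n. (if l = i then f' i (p l) h else f l (p l) y0)) = f' i (p i) h * (\<Prod>l\<in>{0..<n}-{i}. f l (p l) y0)" .
      qed
      finally have 1: "det R = \<dots>" .
      have "det R = (\<Sum>b<n. R $$ (i,b) * cofactor R i b)"
        by (rule laplace_expansion_row) (auto simp: R_def i)
      also have "\<dots> = (\<Sum>b<n. f' i b h * cofactor ?A0 i b)"
      proof (intro sum.cong refl)
        fix b assume "b \<in> {..<n}"
        then have "R $$ (i,b) = f' i b h" using i by (simp add: R_def)
        moreover have "cofactor R i b = cofactor ?A0 i b"
          by (rule cofactor_row_indep[where n=n]) (auto simp: R_def)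
        ultimately show "R $$ (i,b) * cofactor R i b = f' i b h * cofactor ?A0 i b" by simp
      qed
      finally show ?thesis using 1 by simp
    qed
    have "(\<Sum>p\<in>?P. signof p * (\<Sum>i\<in>{0..<n}. f' i (p i) h * (\<Prod>l\<in>{0..<n}-{i}. f l (p l) y0)))
      = (\<Sum>i\<in>{0..<n}. \<Sum>p\<in>?P. signof p * (f' i (p i) h * (\<Prod>l\<in>{0..<n}-{i}. f l (p l) y0)))"
      by (simp add: sum_distrib_left sum.swap[where A="?P"])
    also have "\<dots> = (\<Sum>a<n. \<Sum>b<n. f' a b h * cofactor ?A0 a b)"
      using row by (simp add: atLeast0LessThan)
    finally show ?thesis .
  qed
  show ?thesis unfolding e using D eq by simp
qed

lemma det_posdef:
  fixes G :: "real mat"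
  assumes G: "G \<in> carrier_mat m m"
    and pd: "\<And>v. v \<in> carrier_vec m \<Longrightarrow> v \<noteq> 0\<^sub>v m \<Longrightarrow> (\<Sum>a<m. \<Sum>b<m. v$a * G$$(a,b) * v$b) > 0"
  shows "det G > 0"
proof -
  define H where "H t = mat m m (\<lambda>(a,b). t * G$$(a,b) + (1-t) * (if a = b then 1 else 0))" for t :: real
  have Hc: "H t \<in> carrier_mat m m" for t by (simp add: H_def)
  have nz: "det (H t) \<noteq> 0" if t: "0 \<le> t" "t \<le> 1" for t
  proof
    assume "det (H t) = 0"
    then obtain v where v: "v \<in> carrier_vec m" "v \<noteq> 0\<^sub>v m" "H t *\<^sub>v v = 0\<^sub>v m"
      using det_0_iff_vec_prod_zero_field[OF Hc] by blast
    have rows: "(\<Sum>b<m. (t * G$$(a,b) + (1-t) * (if a = b then 1 else 0)) * v$b) = 0" if a: "a < m" for a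
    proof -
      have "(H t *\<^sub>v v) $ a = 0" using v(3) a by simp
      then show ?thesis using a v(1)
        by (simp add: H_def scalar_prod_def row_def atLeast0LessThan)
    qed
    have "(\<Sum>a<m. v$a * (\<Sum>b<m. (t * G$$(a,b) + (1-t) * (if a = b then 1 else 0)) * v$b)) = 0"
      using rows by simp
    moreover have "(\<Sum>a<m. v$a * (\<Sum>b<m. (t * G$$(a,b) + (1-t) * (if a = b then 1 else 0)) * v$b))
       = t * (\<Sum>a<m. \<Sum>b<m. v$a * G$$(a,b) * v$b) + (1-t) * (\<Sum>a<m. v$a * v$a)"
    proof -
      have inner: "(\<Sum>b<m. (t * G$$(a,b) + (1-t) * (if a = b then 1 else 0)) * v$b)
          = t * (\<Sum>b<m. G$$(a,b) * v$b) + (1-t) * v$a" if a: "a < m" for a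
      proof -
        have "(\<Sum>b<m. (t * G$$(a,b) + (1-t) * (if a = b then 1 else 0)) * v$b)
           = (\<Sum>b<m. t * (G$$(a,b) * v$b)) + (\<Sum>b<m. (1-t) * (if a = b then v$b else 0))"
          by (subst sum.distrib[symmetric]) (intro sum.cong refl, simp add: algebra_simps)
        also have "\<dots> = t * (\<Sum>b<m. G$$(a,b) * v$b) + (1-t) * v$a"
          using a by (simp add: sum_distrib_left[symmetric])
        finally show ?thesis .
      qed
      have "(\<Sum>a<m. v$a * (\<Sum>b<m. (t * G$$(a,b) + (1-t) * (if a = b then 1 else 0)) * v$b))
         = (\<Sum>a<m. t * (\<Sum>b<m. v$a * G$$(a,b) * v$b) + (1-t) * (v$a * v$a))"
        using inner by (intro sum.cong refl) (simp add: distrib_left sum_distrib_left mult_ac)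
      also have "\<dots> = t * (\<Sum>a<m. \<Sum>b<m. v$a * G$$(a,b) * v$b) + (1-t) * (\<Sum>a<m. v$a * v$a)"
        by (simp add: sum.distrib sum_distrib_left)
      finally show ?thesis .
    qed
    moreover have "(\<Sum>a<m. v$a * v$a) > 0"
    proof -
      obtain a where a: "a < m" "v$a \<noteq> 0" using v(1,2) by (metis carrier_vecD eq_vecI index_zero_vec(1) index_zero_vec(2))
      have "v$a * v$a \<le> (\<Sum>a<m. v$a * v$a)"
        using a by (intro member_le_sum) auto
      moreover have "v$a * v$a > 0" using a(2) not_real_square_gt_zero by blast
      ultimately show ?thesis by linarith
    qed
    moreover have "(\<Sum>a<m. \<Sum>b<m. v$a * G$$(a,b) * v$b) > 0" using pd v by blast
    ultimately show False using t
      by (cases "t = 0") (auto simp: add_nonneg_pos add_pos_nonneg intro!: add_pos_nonneg[THEN less_imp_neq] ,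
          smt (verit) mult_nonneg_nonneg mult_pos_pos)
  qed
  have cont: "continuous_on {0..1} (\<lambda>t. det (H t))"
  proof (intro continuous_at_imp_continuous_on ballI)
    fix t :: real
    have "((\<lambda>t. det (mat m m (\<lambda>(a,b). (\<lambda>a b t. t * G$$(a,b) + (1-t) * (if a = b then 1 else 0)) a b t))) has_derivative
       (\<lambda>h. \<Sum>a<m. \<Sum>b<m. (\<lambda>a b h. h * G$$(a,b) - h * (if a = b then 1 else 0)) a b h *
          cofactor (mat m m (\<lambda>(a,b). (\<lambda>a b t. t * G$$(a,b) + (1-t) * (if a = b then 1 else 0)) a b t)) a b)) (at t)"
      by (rule det_has_derivative) (auto intro!: derivative_eq_intros)
    then show "isCont (\<lambda>t. det (H t)) t"
      unfolding H_def by (rule has_derivative_continuous)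
  qed
  have H0: "H 0 = 1\<^sub>m m" by (intro eq_matI) (auto simp: H_def)
  have H1: "H 1 = G" using G by (intro eq_matI) (auto simp: H_def)
  show ?thesis
  proof (rule ccontr)
    assume "\<not> det G > 0"
    then have "det (H 1) \<le> 0" "0 \<le> det (H 0)" using H0 H1 by auto
    then obtain t where "0 \<le> t" "t \<le> 1" "det (H t) = 0"
      using IVT2'[of "\<lambda>t. det (H t)" 1 0 0, OF _ _ _ cont] by auto
    then show False using nz by blast
  qed
qed

definition Lm :: "nat \<Rightarrow> (nat \<Rightarrow> real) \<Rightarrow> real mat" where
  "Lm N u = mat N N (\<lambda>(a,c). (if a = c then 1 else 0) - (if c = 0 \<and> 0 < a then u a else 0))"

lemma Lm_carrier: "Lm N u \<in> carrier_mat N N" by (simp add: Lm_def)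

lemma det_Lm: "det (Lm N u) = 1"
proof -
  have "det (Lm N u) = prod_list (diag_mat (Lm N u))"
    by (rule det_lower_triangular[of N]) (auto simp: Lm_def)
  also have "diag_mat (Lm N u) = replicate N 1"
    by (auto simp: diag_mat_def Lm_def intro!: nth_equalityI)
  finally show ?thesis by simp
qed

lemma Lm_mult:
  assumes M: "M \<in> carrier_mat N N" and N: "0 < N"
  shows "Lm N u * M = mat N N (\<lambda>(a,b). M$$(a,b) - (if 0 < a then u a * M$$(0,b) else 0))"
proof (rule eq_matI)
  fix a b assume a: "a < dim_row (mat N N (\<lambda>(a,b). M$$(a,b) - (if 0 < a then u a * M$$(0,b) else 0)))"
    and b: "b < dim_col (mat N N (\<lambda>(a,b). M$$(a,b) - (if 0 < a then u a * M$$(0,b) else 0)))"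
  then have a: "a < N" and b: "b < N" by auto
  have "(Lm N u * M) $$ (a,b) = (\<Sum>c\<in>{0..<N}. ((if a = c then 1 else 0) - (if c = 0 \<and> 0 < a then u a else 0)) * M$$(c,b))"
    using a b M by (simp add: Lm_def scalar_prod_def row_def col_def)
  also have "\<dots> = (\<Sum>c\<in>{0..<N}. (if a = c then M$$(c,b) else 0)) - (\<Sum>c\<in>{0..<N}. (if c = 0 then (if 0 < a then u a * M$$(c,b) else 0) else 0))"
    by (subst sum_subtractf[symmetric]) (intro sum.cong refl, auto)
  also have "\<dots> = M$$(a,b) - (if 0 < a then u a * M$$(0,b) else 0)"
    using a N by (simp add: sum.delta sum.delta')
  finally show "(Lm N u * M) $$ (a,b) = mat N N (\<lambda>(a,b). M$$(a,b) - (if 0 < a then u a * M$$(0,b) else 0)) $$ (a,b)"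
    using a b by simp
qed (use M in \<open>auto simp: Lm_def\<close>)

lemma mult_LmT:
  assumes M: "M \<in> carrier_mat N N" and N: "0 < N"
  shows "M * (Lm N u)\<^sup>T = mat N N (\<lambda>(a,b). M$$(a,b) - (if 0 < b then u b * M$$(a,0) else 0))"
proof (rule eq_matI)
  fix a b assume a: "a < dim_row (mat N N (\<lambda>(a,b). M$$(a,b) - (if 0 < b then u b * M$$(a,0) else 0)))"
    and b: "b < dim_col (mat N N (\<lambda>(a,b). M$$(a,b) - (if 0 < b then u b * M$$(a,0) else 0)))"
  then have a: "a < N" and b: "b < N" by auto
  have "(M * (Lm N u)\<^sup>T) $$ (a,b) = (\<Sum>c\<in>{0..<N}. M$$(a,c) * ((if b = c then 1 else 0) - (if c = 0 \<and> 0 < b then u b else 0)))"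
    using a b M by (simp add: Lm_def scalar_prod_def row_def col_def)
  also have "\<dots> = (\<Sum>c\<in>{0..<N}. (if b = c then M$$(a,c) else 0)) - (\<Sum>c\<in>{0..<N}. (if c = 0 then (if 0 < b then u b * M$$(a,c) else 0) else 0))"
    by (subst sum_subtractf[symmetric]) (intro sum.cong refl, auto)
  also have "\<dots> = M$$(a,b) - (if 0 < b then u b * M$$(a,0) else 0)"
    using b N by (simp add: sum.delta sum.delta')
  finally show "(M * (Lm N u)\<^sup>T) $$ (a,b) = mat N N (\<lambda>(a,b). M$$(a,b) - (if 0 < b then u b * M$$(a,0) else 0)) $$ (a,b)"
    using a b by simp
qed (use M in \<open>auto simp: Lm_def\<close>)

lemma sum_single_nz:
  assumes "finite A" "i \<in> A" "\<And>b. b \<in> A \<Longrightarrow> b \<noteq> i \<Longrightarrow> f b = (0::real)"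
  shows "sum f A = f i"
proof -
  have "sum f A = (\<Sum>b\<in>A. if b = i then f i else 0)"
    using assms by (intro sum.cong) auto
  also have "\<dots> = f i" using assms by (simp add: sum.delta')
  finally show ?thesis .
qed

lemma sum_single_nz_c:
  assumes "finite A" "i \<in> A" "\<And>b. b \<in> A \<Longrightarrow> b \<noteq> i \<Longrightarrow> f b = (0::complex)"
  shows "sum f A = f i"
proof -
  have "sum f A = (\<Sum>b\<in>A. if b = i then f i else 0)"
    using assms by (intro sum.cong) auto
  also have "\<dots> = f i" using assms by (simp add: sum.delta')
  finally show ?thesis .
qed

lemma cm_det:
  fixes x :: "nat \<Rightarrow> 'a::euclidean_space" and j :: nat
  shows "(-1)^(j+1) * det (cayley_menger x j) =
     2^j * det (mat j j (\<lambda>(a,b). inner (x (a+1) - x (j+1)) (x (b+1) - x (j+1))))"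
proof -
  define N where "N = j+2"
  define CM where "CM = cayley_menger x j"
  define q where "q a = x a - x (j+1)" for a
  define u where "u a = (norm (q a))^2" for a
  define G where "G = mat j j (\<lambda>(a,b). inner (q (a+1)) (q (b+1)))"
  have CMc: "CM \<in> carrier_mat N N" unfolding CM_def cayley_menger_def N_def by simp
  define K where "K = mat N N (\<lambda>(a,b). if a = 0 \<and> b = 0 then 0 else if a = 0 \<or> b = 0 then 1 else -2 * inner (q a) (q b))"
  have Kc: "K \<in> carrier_mat N N" by (simp add: K_def)
  have N0: "0 < N" by (simp add: N_def)
  have LCMc: "Lm N u * CM \<in> carrier_mat N N" using CMc Lm_carrier by (metis mult_carrier_mat)
  have LCM: "Lm N u * CM * (Lm N u)\<^sup>T = K"
  proof -
    have 1: "Lm N u * CM = mat N N (\<lambda>(a,b). CM$$(a,b) - (if 0 < a then u a * CM$$(0,b) else 0))"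
      by (rule Lm_mult[OF CMc N0])
    show ?thesis
      unfolding mult_LmT[OF LCMc N0] unfolding 1
    proof (rule eq_matI)
      fix a b assume "a < dim_row K" "b < dim_col K"
      then have a: "a < N" and b: "b < N" by (auto simp: K_def)
      have e: "(norm (x a - x b))^2 = u a + u b - 2 * inner (q a) (q b)"
      proof -
        have "x a - x b = q a - q b" by (simp add: q_def)
        then show ?thesis
          by (simp add: u_def power2_norm_eq_inner inner_diff_left inner_diff_right inner_commute)
      qed
      show "mat N N (\<lambda>(a, b). mat N N (\<lambda>(a, b). CM $$ (a, b) - (if 0 < a then u a * CM $$ (0, b) else 0)) $$ (a, b) -
               (if 0 < b then u b * mat N N (\<lambda>(a, b). CM $$ (a, b) - (if 0 < a then u a * CM $$ (0, b) else 0)) $$ (a, 0) else 0)) $$ (a, b) = K $$ (a, b)"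
        using a b N0 e by (simp add: K_def CM_def cayley_menger_def N_def)
    qed (auto simp: K_def)
  qed
  have "det K = det (Lm N u * CM) * det ((Lm N u)\<^sup>T)"
    unfolding LCM[symmetric] by (rule det_mult[OF LCMc]) (simp add: Lm_carrier)
  also have "\<dots> = det CM"
    using det_mult[OF Lm_carrier CMc] det_transpose[OF Lm_carrier] by (simp add: det_Lm)
  finally have KCM: "det K = det CM" .
  define M' where "M' = mat_delete K (j+1) 0"
  have M'c: "M' \<in> carrier_mat (j+1) (j+1)" by (simp add: M'_def K_def N_def mat_delete_def)
  have M'e: "M' $$ (a,b) = K $$ (a, b+1)" if "a < j+1" "b < j+1" for a b
    using that by (simp add: M'_def mat_delete_def K_def N_def)
  have "det K = (\<Sum>b<N. K $$ (j+1,b) * cofactor K (j+1) b)"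
    by (rule laplace_expansion_row[OF Kc]) (simp add: N_def)
  also have "\<dots> = K $$ (j+1,0) * cofactor K (j+1) 0"
    by (rule sum_single_nz) (auto simp: N_def K_def q_def)
  also have "\<dots> = (-1)^(j+1) * det M'"
    by (simp add: K_def N_def cofactor_def M'_def)
  finally have dK: "det K = (-1)^(j+1) * det M'" .
  have "det M' = (\<Sum>a<j+1. M' $$ (a,j) * cofactor M' a j)"
    by (rule laplace_expansion_column[OF M'c]) simp
  also have "\<dots> = M' $$ (0,j) * cofactor M' 0 j"
    by (rule sum_single_nz) (auto simp: M'e K_def q_def N_def)
  also have "\<dots> = (-1)^j * det (mat_delete M' 0 j)"
    by (simp add: M'e K_def N_def cofactor_def)
  also have "mat_delete M' 0 j = (-2) \<cdot>\<^sub>m G"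
    by (rule eq_matI) (auto simp: mat_delete_def M'e G_def K_def N_def M'_def)
  also have "det ((-2) \<cdot>\<^sub>m G) = (-2)^j * det G" by (simp add: G_def)
  finally have dM: "det M' = (-1)^j * ((-2)^j * det G)" .
  have pm: "((-1::real)^(j+1) * (-1)^j) = -1"
    by (simp add: power_add[symmetric] mult_2[symmetric] power_mult)
  have "det CM = ((-1)^(j+1) * (-1)^j) * ((-2)^j * det G)"
    using KCM dK dM by (simp add: mult_ac)
  then have dCM: "det CM = - ((-2)^j * det G)" using pm by simp
  have "(-1)^(j+1) * det CM = ((-1)^j * (-2)^j) * det G"
    unfolding dCM by simp
  also have "\<dots> = 2^j * det G"
    by (simp add: power_mult_distrib[symmetric])
  finally show ?thesis by (simp add: G_def q_def CM_def)
qed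

lemma cm_pos:
  fixes x :: "nat \<Rightarrow> 'a::euclidean_space" and j :: nat
  assumes inj: "inj_on x {1..j+1}" and ind: "\<not> affine_dependent (x ` {1..j+1})"
  shows "(-1)^(j+1) * det (cayley_menger x j) / 2^j > 0"
proof -
  define q where "q a = x a - x (j+1)" for a
  define G where "G = mat j j (\<lambda>(a,b). inner (q (a+1)) (q (b+1)))"
  have "det G > 0"
  proof (rule det_posdef[of G j])
    show "G \<in> carrier_mat j j" by (simp add: G_def)
    fix v :: "real vec" assume v: "v \<in> carrier_vec j" "v \<noteq> 0\<^sub>v j"
    define w where "w = (\<Sum>a<j. v$a *\<^sub>R q (a+1))"
    have "(\<Sum>a<j. \<Sum>b<j. v$a * G$$(a,b) * v$b) = inner w w"
      by (auto simp: w_def G_def inner_sum_left inner_sum_right sum_distrib_left mult_ac inner_commute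
          intro!: sum.cong)
    moreover have "w \<noteq> 0"
    proof
      assume w0: "w = 0"
      obtain a0 where a0: "a0 < j" "v$a0 \<noteq> 0"
        using v by (metis carrier_vecD eq_vecI index_zero_vec(1) index_zero_vec(2))
      define c where "c i = (if i = j+1 then - (\<Sum>a<j. v$a) else v$(i-1))" for i
      have split: "(\<Sum>i\<in>{1..j+1}. f i) = f (j+1) + (\<Sum>a<j. f (a+1))" for f :: "nat \<Rightarrow> 'b::comm_monoid_add"
        using sum_bounds_lt_plus1[of f j] by (simp add: add.commute)
      have c1: "(\<Sum>i\<in>{1..j+1}. c i) = 0"
        unfolding split by (simp add: c_def)
      have c2: "(\<Sum>i\<in>{1..j+1}. c i *\<^sub>R x i) = 0"
      proof -
        have "(\<Sum>i\<in>{1..j+1}. c i *\<^sub>R x i) = (\<Sum>a<j. v$a *\<^sub>R x (a+1)) - (\<Sum>a<j. v$a) *\<^sub>R x (j+1)"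
          unfolding split by (simp add: c_def)
        also have "\<dots> = w"
          by (simp add: w_def q_def scaleR_diff_right sum_subtractf scaleR_sum_left)
        finally show ?thesis using w0 by simp
      qed
      define U where "U y = c (the_inv_into {1..j+1} x y)" for y
      have Ux: "U (x i) = c i" if "i \<in> {1..j+1}" for i
        using that inj by (simp add: U_def the_inv_into_f_f)
      have "affine_dependent (x ` {1..j+1})"
      proof (subst affine_dependent_explicit_finite, simp, intro exI conjI)
        show "sum U (x ` {1..j+1}) = 0"
          unfolding sum.reindex[OF inj] using c1 Ux by (simp del: One_nat_def add: comp_def)
        show "(\<Sum>y\<in>x ` {1..j+1}. U y *\<^sub>R y) = 0"
          unfolding sum.reindex[OF inj] using c2 Ux by (simp del: One_nat_def add: comp_def)
        show "\<exists>y\<in>x ` {1..j+1}. U y \<noteq> 0"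
          using a0 by (intro bexI[of _ "x (a0+1)"]) (auto simp: Ux c_def)
      qed
      then show False using ind by simp
    qed
    ultimately show "(\<Sum>a<j. \<Sum>b<j. v$a * G$$(a,b) * v$b) > 0" by simp
  qed
  then show ?thesis using cm_det[of j x] by (simp add: G_def q_def)
qed

lemma S_deriv:
  fixes x :: "nat \<Rightarrow> 'a::euclidean_space" and k :: 'a
  assumes inj: "inj_on (sig k x) {1..j+1}" and p: "p \<in> {1..j+1}"
  shows "((\<lambda>y. S_sum k (x(p := y)) j) has_derivative
     (\<lambda>h. (- \<i> * S_term k x j p
               + (\<Sum>t\<in>{1..j+1} - {p}. (S_term k x j t + S_term k x j p)
                                           / complex_of_real (sig k x t - sig k x p))) * complex_of_real (k \<bullet> h))) (at (x p))"
proof -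
  define I where "I = {1..j+1}"
  define \<sigma> where "\<sigma> = sig k x"
  define s where "s t z = (if t = p then z else complex_of_real (\<sigma> t))" for t z
  define ST where "ST t z = exp (- \<i> * s t z) / (\<Prod>l\<in>I - {t}. (s t z - s l z))" for t z
  define \<Phi> where "\<Phi> z = (\<Sum>t\<in>I. ST t z)" for z
  define z0 where "z0 = complex_of_real (\<sigma> p)"
  have fin: "finite I" by (simp add: I_def)
  have pI: "p \<in> I" using p by (simp add: I_def)
  have s0: "s t z0 = complex_of_real (\<sigma> t)" for t by (simp add: s_def z0_def)
  have sne: "s t z0 - s l z0 \<noteq> 0" if "t \<in> I" "l \<in> I" "l \<noteq> t" for t l
    using that inj by (auto simp: s0 I_def \<sigma>_def inj_on_def)
  have ST0: "ST t z0 = S_term k x j t" for t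
    by (simp add: ST_def S_term_def s0 I_def \<sigma>_def)
  have eq\<Phi>: "S_sum k (x(p := y)) j = \<Phi> (complex_of_real (k \<bullet> y))" for y
    unfolding S_sum_def \<Phi>_def ST_def S_term_def I_def
    by (intro sum.cong refl arg_cong2[where f="(/)"] prod.cong)
       (auto simp: s_def sig_def \<sigma>_def)
  define c where "c t = (if t = p then 1 else 0 :: complex)" for t
  have Dt: "(ST t has_field_derivative
      ST t z0 * (- \<i> * c t - (\<Sum>l\<in>I - {t}. (c t - c l) / (s t z0 - s l z0)))) (at z0)"
    if t: "t \<in> I" for t
  proof -
    have ds: "(s l has_field_derivative c l) (at z0)" for l
    proof (cases "l = p")
      case True
      then have "s l = (\<lambda>z. z)" by (auto simp: s_def)
      then show ?thesis using True by (simp add: c_def)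
    next
      case False
      then have "s l = (\<lambda>z. complex_of_real (\<sigma> l))" by (auto simp: s_def)
      then show ?thesis using False by (simp add: c_def)
    qed
    have E: "((\<lambda>z. exp (- \<i> * s t z)) has_field_derivative exp (- \<i> * s t z0) * (- \<i> * c t)) (at z0)"
      by (auto intro!: derivative_eq_intros ds)
    have P: "((\<lambda>z. \<Prod>l\<in>I - {t}. (s t z - s l z)) has_field_derivative
        (\<Prod>l\<in>I - {t}. (s t z0 - s l z0)) * (\<Sum>l\<in>I - {t}. (c t - c l) / (s t z0 - s l z0))) (at z0)"
      by (rule has_field_derivative_prod') (use sne t in \<open>auto intro!: derivative_eq_intros ds\<close>)
    have Pnz: "(\<Prod>l\<in>I - {t}. (s t z0 - s l z0)) \<noteq> 0"
      using fin sne t by (simp add: prod_zero_iff)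
    show ?thesis
      unfolding ST_def
      by (rule DERIV_cong[OF DERIV_divide[OF E P Pnz]]) (simp add: field_simps Pnz)
  qed
  have D\<Phi>: "(\<Phi> has_field_derivative
      (\<Sum>t\<in>I. ST t z0 * (- \<i> * c t - (\<Sum>l\<in>I - {t}. (c t - c l) / (s t z0 - s l z0))))) (at z0)"
    unfolding \<Phi>_def[abs_def] by (rule DERIV_sum) (rule Dt)
  have val: "(\<Sum>t\<in>I. ST t z0 * (- \<i> * c t - (\<Sum>l\<in>I - {t}. (c t - c l) / (s t z0 - s l z0))))
     = - \<i> * S_term k x j p + (\<Sum>t\<in>I - {p}. (S_term k x j t + S_term k x j p) / complex_of_real (\<sigma> t - \<sigma> p))"
  proof -
    have "(\<Sum>t\<in>I. ST t z0 * (- \<i> * c t - (\<Sum>l\<in>I - {t}. (c t - c l) / (s t z0 - s l z0))))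
       = ST p z0 * (- \<i> * c p - (\<Sum>l\<in>I - {p}. (c p - c l) / (s p z0 - s l z0)))
         + (\<Sum>t\<in>I - {p}. ST t z0 * (- \<i> * c t - (\<Sum>l\<in>I - {t}. (c t - c l) / (s t z0 - s l z0))))"
      using fin pI by (simp add: sum.remove)
    also have "(\<Sum>l\<in>I - {p}. (c p - c l) / (s p z0 - s l z0)) = (\<Sum>l\<in>I - {p}. 1 / complex_of_real (\<sigma> p - \<sigma> l))"
      by (intro sum.cong refl) (auto simp: c_def s0)
    also have "(\<Sum>t\<in>I - {p}. ST t z0 * (- \<i> * c t - (\<Sum>l\<in>I - {t}. (c t - c l) / (s t z0 - s l z0))))
        = (\<Sum>t\<in>I - {p}. S_term k x j t / complex_of_real (\<sigma> t - \<sigma> p))"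
    proof (intro sum.cong refl)
      fix t assume t: "t \<in> I - {p}"
      have "(\<Sum>l\<in>I - {t}. (c t - c l) / (s t z0 - s l z0)) = (c t - c p) / (s t z0 - s p z0)"
        by (rule sum_single_nz_c) (use t fin pI in \<open>auto simp: c_def\<close>)
      also have "\<dots> = - 1 / complex_of_real (\<sigma> t - \<sigma> p)"
        using t by (simp add: c_def s0)
      finally have e: "(\<Sum>l\<in>I - {t}. (c t - c l) / (s t z0 - s l z0)) = - 1 / complex_of_real (\<sigma> t - \<sigma> p)" .
      show "ST t z0 * (- \<i> * c t - (\<Sum>l\<in>I - {t}. (c t - c l) / (s t z0 - s l z0))) =
          S_term k x j t / complex_of_real (\<sigma> t - \<sigma> p)"
        unfolding e using t by (simp add: c_def ST0)
    qed
    finally have 1: "(\<Sum>t\<in>I. ST t z0 * (- \<i> * c t - (\<Sum>l\<in>I - {t}. (c t - c l) / (s t z0 - s l z0))))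
      = S_term k x j p * (- \<i> - (\<Sum>l\<in>I - {p}. 1 / complex_of_real (\<sigma> p - \<sigma> l)))
        + (\<Sum>t\<in>I - {p}. S_term k x j t / complex_of_real (\<sigma> t - \<sigma> p))"
      by (simp add: ST0 c_def)
    have 2: "S_term k x j p * (- (\<Sum>l\<in>I - {p}. 1 / complex_of_real (\<sigma> p - \<sigma> l)))
       = (\<Sum>t\<in>I - {p}. S_term k x j p / complex_of_real (\<sigma> t - \<sigma> p))"
    proof -
      have "S_term k x j p * (- (\<Sum>l\<in>I - {p}. 1 / complex_of_real (\<sigma> p - \<sigma> l)))
          = (\<Sum>l\<in>I - {p}. - (S_term k x j p * (1 / complex_of_real (\<sigma> p - \<sigma> l))))"
        by (simp add: sum_distrib_left sum_negf)
      also have "\<dots> = (\<Sum>t\<in>I - {p}. S_term k x j p / complex_of_real (\<sigma> t - \<sigma> p))"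
      proof (intro sum.cong refl)
        fix t
        have "complex_of_real (\<sigma> t - \<sigma> p) = - complex_of_real (\<sigma> p - \<sigma> t)" by simp
        then show "- (S_term k x j p * (1 / complex_of_real (\<sigma> p - \<sigma> t))) = S_term k x j p / complex_of_real (\<sigma> t - \<sigma> p)"
          by (simp only: divide_minus_right times_divide_eq_right mult_1_right)
      qed
      finally show ?thesis .
    qed
    have r: "S_term k x j p * (- \<i> - (\<Sum>l\<in>I - {p}. 1 / complex_of_real (\<sigma> p - \<sigma> l)))
       = - \<i> * S_term k x j p + S_term k x j p * (- (\<Sum>l\<in>I - {p}. 1 / complex_of_real (\<sigma> p - \<sigma> l)))"
      by (simp add: algebra_simps)
    have se: "(\<Sum>t\<in>I - {p}. (S_term k x j t + S_term k x j p) / complex_of_real (\<sigma> t - \<sigma> p))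
       = (\<Sum>t\<in>I - {p}. S_term k x j t / complex_of_real (\<sigma> t - \<sigma> p)) + (\<Sum>t\<in>I - {p}. S_term k x j p / complex_of_real (\<sigma> t - \<sigma> p))"
      by (simp only: add_divide_distrib sum.distrib)
    show ?thesis unfolding 1 r 2 se by (simp only: add_ac)
  qed
  have lin: "((\<lambda>y. complex_of_real (k \<bullet> y)) has_derivative (\<lambda>h. complex_of_real (k \<bullet> h))) (at (x p))"
    by (auto intro!: derivative_eq_intros)
  have "((\<lambda>y. \<Phi> (complex_of_real (k \<bullet> y))) has_derivative
      (\<lambda>h. (\<Sum>t\<in>I. ST t z0 * (- \<i> * c t - (\<Sum>l\<in>I - {t}. (c t - c l) / (s t z0 - s l z0)))) * complex_of_real (k \<bullet> h))) (at (x p))"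
    by (rule has_derivative_compose[OF lin]) (use D\<Phi> in \<open>simp add: z0_def \<sigma>_def sig_def has_field_derivative_def\<close>)
  then show ?thesis
    unfolding eq\<Phi> val by (simp add: I_def \<sigma>_def)
qed

lemma cofactor_symm:
  assumes A: "A \<in> carrier_mat n n" and sym: "A\<^sup>T = A"
  shows "cofactor A i c = cofactor A c i"
proof -
  have "mat_delete (A\<^sup>T) i c = (mat_delete A c i)\<^sup>T"
    using A by (intro eq_matI) (auto simp: mat_delete_def)
  then have "det (mat_delete A i c) = det (mat_delete A c i)"
    using sym det_transpose[OF mat_delete_carrier[OF A, of c i]] by simp
  then show ?thesis unfolding cofactor_def by (simp add: add.commute)
qed

lemma alg_aux: "(a::real) * (2 * S) * (inverse s / 2) = a / s * S"
proof -
  have "a * (2 * S) * (inverse s / 2) = a * inverse s * S" by (simp only: mult_ac divide_inverse) (simp add: mult_ac)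
  then show ?thesis by (simp only: divide_inverse)
qed

lemma gamma_deriv:
  fixes x :: "nat \<Rightarrow> 'a::euclidean_space"
  assumes inj: "inj_on x {1..j+1}" and ind: "\<not> affine_dependent (x ` {1..j+1})"
    and p: "p \<in> {1..j+1}"
  shows "((\<lambda>y. content_gamma (x(p := y)) j) has_derivative
     (\<lambda>h. ((-1)^(j+1) / 2^j) / content_gamma x j *
        (\<Sum>m\<in>{1..j+1} - {p}. adj_mat (cayley_menger x j) $$ (p, m) * ((2 *\<^sub>R (x p - x m)) \<bullet> h)))) (at (x p))"
proof -
  define N where "N = j+2"
  define I where "I = {1..j+1}"
  define f where "f a b y = (if a = 0 \<and> b = 0 then 0 else if a = 0 \<or> b = 0 then 1
      else (norm ((x(p := y)) a - (x(p := y)) b))^2)" for a b y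
  define g where "g m h = 2 * ((x p - x m) \<bullet> h)" for m h
  define f' where "f' a b h = (if a = 0 \<or> b = 0 then 0 else if a = p \<and> b \<noteq> p then g b h
      else if b = p \<and> a \<noteq> p then g a h else 0)" for a b h
  define CM where "CM = cayley_menger x j"
  have CMc: "CM \<in> carrier_mat N N" by (simp add: CM_def cayley_menger_def N_def)
  have CMsym: "CM\<^sup>T = CM"
    using CMc by (intro eq_matI) (auto simp: CM_def cayley_menger_def N_def norm_minus_commute)
  have CMy: "cayley_menger (x(p := y)) j = mat N N (\<lambda>(a,b). f a b y)" for y
    by (simp add: cayley_menger_def f_def N_def)
  have CM0: "mat N N (\<lambda>(a,b). f a b (x p)) = CM"
    by (simp add: CMy[symmetric] CM_def)
  have p0: "p \<noteq> 0" using p by simp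
  have df: "(f a b has_derivative f' a b) (at (x p))" for a b
  proof -
    consider "a = 0 \<or> b = 0" | "a \<noteq> 0" "b \<noteq> 0" "a = p" "b \<noteq> p" | "a \<noteq> 0" "b \<noteq> 0" "b = p" "a \<noteq> p"
      | "a \<noteq> 0" "b \<noteq> 0" "a = p" "b = p" | "a \<noteq> 0" "b \<noteq> 0" "a \<noteq> p" "b \<noteq> p" by blast
    then show ?thesis
    proof cases
      case 1
      then have "f a b = (\<lambda>y. if a = 0 \<and> b = 0 then 0 else 1)" "f' a b = (\<lambda>h. 0)"
        by (auto simp: f_def f'_def)
      then show ?thesis by simp
    next
      case 2
      then have "f a b = (\<lambda>y. inner (y - x b) (y - x b))" "f' a b = (\<lambda>h. 2 * ((x p - x b) \<bullet> h))"
        by (auto simp: f_def f'_def g_def power2_norm_eq_inner)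
      then show ?thesis
        by (auto intro!: derivative_eq_intros simp: inner_commute)
    next
      case 3
      then have "f a b = (\<lambda>y. inner (y - x a) (y - x a))" "f' a b = (\<lambda>h. 2 * ((x p - x a) \<bullet> h))"
        by (auto simp: f_def f'_def g_def power2_norm_eq_inner inner_diff_left inner_diff_right inner_commute)
      then show ?thesis
        by (auto intro!: derivative_eq_intros simp: inner_commute)
    next
      case 4
      then have "f a b = (\<lambda>y. 0)" "f' a b = (\<lambda>h. 0)"
        by (auto simp: f_def f'_def)
      then show ?thesis by simp
    next
      case 5
      then have "f a b = (\<lambda>y. (norm (x a - x b))^2)" "f' a b = (\<lambda>h. 0)"
        by (auto simp: f_def f'_def)
      then show ?thesis by simp
    qed
  qed
  have Ddet: "((\<lambda>y. det (cayley_menger (x(p := y)) j)) has_derivative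
     (\<lambda>h. \<Sum>a<N. \<Sum>b<N. f' a b h * cofactor CM a b)) (at (x p))"
    unfolding CMy CM0[symmetric] by (rule det_has_derivative) (rule df)
  have sumeq: "(\<Sum>a<N. \<Sum>b<N. f' a b h * cofactor CM a b)
      = 2 * (\<Sum>m\<in>I - {p}. adj_mat CM $$ (p, m) * ((2 *\<^sub>R (x p - x m)) \<bullet> h))" for h
  proof -
    have fin: "finite {..<N}" by simp
    have IN: "{..<N} \<inter> (I - {p}) = I - {p}" by (auto simp: I_def N_def)
    have pt: "f' a b h * cofactor CM a b =
       (if a = p then (if b \<in> I - {p} then g b h * cofactor CM p b else 0) else 0)
     + (if b = p then (if a \<in> I - {p} then g a h * cofactor CM a p else 0) else 0)"
      if "a < N" "b < N" for a b
      using that p0 by (auto simp: f'_def I_def N_def)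
    have "(\<Sum>a<N. \<Sum>b<N. f' a b h * cofactor CM a b)
       = (\<Sum>a<N. (if a = p then (\<Sum>b<N. if b \<in> I - {p} then g b h * cofactor CM p b else 0) else 0))
       + (\<Sum>a<N. (if a \<in> I - {p} then g a h * cofactor CM a p else 0))"
    proof -
      have "(\<Sum>a<N. \<Sum>b<N. f' a b h * cofactor CM a b) = (\<Sum>a<N. 
          (\<Sum>b<N. (if a = p then (if b \<in> I - {p} then g b h * cofactor CM p b else 0) else 0))
        + (\<Sum>b<N. (if b = p then (if a \<in> I - {p} then g a h * cofactor CM a p else 0) else 0)))"
        by (intro sum.cong refl) (simp add: pt sum.distrib)
      also have "\<dots> = (\<Sum>a<N. (if a = p then (\<Sum>b<N. if b \<in> I - {p} then g b h * cofactor CM p b else 0) else 0)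
          + (if a \<in> I - {p} then g a h * cofactor CM a p else 0))"
      proof (intro sum.cong refl arg_cong2[where f="(+)"])
        fix a
        show "(\<Sum>b<N. (if a = p then (if b \<in> I - {p} then g b h * cofactor CM p b else 0) else 0))
          = (if a = p then (\<Sum>b<N. if b \<in> I - {p} then g b h * cofactor CM p b else 0) else 0)"
          by simp
        have "p \<in> {..<N}" using p by (simp add: N_def)
        then show "(\<Sum>b<N. (if b = p then (if a \<in> I - {p} then g a h * cofactor CM a p else 0) else 0))
          = (if a \<in> I - {p} then g a h * cofactor CM a p else 0)"
          by (simp add: sum.delta)
      qed
      finally show ?thesis by (simp only: sum.distrib)
    qed
    also have "\<dots> = (\<Sum>b\<in>I - {p}. g b h * cofactor CM p b) + (\<Sum>a\<in>I - {p}. g a h * cofactor CM a p)"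
    proof -
      have r: "(\<Sum>b<N. if b \<in> I - {p} then F b else 0) = (\<Sum>b\<in>I - {p}. F b)" for F :: "nat \<Rightarrow> real"
        using sum.inter_restrict[OF fin, of F "I - {p}"] IN by simp
      have pN: "p \<in> {..<N}" using p by (simp add: N_def)
      show ?thesis unfolding r using pN by simp
    qed
    also have "\<dots> = 2 * (\<Sum>m\<in>I - {p}. adj_mat CM $$ (p, m) * ((2 *\<^sub>R (x p - x m)) \<bullet> h))"
    proof -
      have "adj_mat CM $$ (p, m) = cofactor CM m p" if "m \<in> I" for m
        using that p CMc by (simp add: adj_mat_def I_def N_def)
      moreover have "cofactor CM p m = cofactor CM m p" for m
        by (rule cofactor_symm[OF CMc CMsym])
      ultimately have A: "adj_mat CM $$ (p, m) = cofactor CM m p" "cofactor CM p m = cofactor CM m p" if "m \<in> I - {p}" for m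
        using that by auto
      have "(\<Sum>b\<in>I - {p}. g b h * cofactor CM p b) + (\<Sum>a\<in>I - {p}. g a h * cofactor CM a p)
         = (\<Sum>m\<in>I - {p}. g m h * cofactor CM p m + g m h * cofactor CM m p)"
        by (simp add: sum.distrib)
      also have "\<dots> = (\<Sum>m\<in>I - {p}. 2 * (adj_mat CM $$ (p, m) * ((2 *\<^sub>R (x p - x m)) \<bullet> h)))"
        by (intro sum.cong refl) (simp add: A g_def)
      also have "\<dots> = 2 * (\<Sum>m\<in>I - {p}. adj_mat CM $$ (p, m) * ((2 *\<^sub>R (x p - x m)) \<bullet> h))"
        by (simp add: sum_distrib_left)
      finally show ?thesis .
    qed
    finally show ?thesis .
  qed
  define c :: real where "c = (-1)^(j+1)"
  define u0 where "u0 = (c / 2^j) * det CM"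
  have u0: "u0 > 0" using cm_pos[OF inj ind] by (simp add: u0_def c_def CM_def)
  have gam: "content_gamma x j = sqrt u0" by (simp add: content_gamma_def u0_def c_def CM_def)
  have gy: "content_gamma (x(p := y)) j = sqrt ((c / 2^j) * det (cayley_menger (x(p := y)) j))" for y
    by (simp add: content_gamma_def c_def)
  have D2: "((\<lambda>y. (c / 2^j) * det (cayley_menger (x(p := y)) j)) has_derivative
      (\<lambda>h. (c / 2^j) * (\<Sum>a<N. \<Sum>b<N. f' a b h * cofactor CM a b))) (at (x p))"
    by (rule has_derivative_mult_right[OF Ddet])
  have sq: "DERIV sqrt ((c / 2^j) * det (cayley_menger (x(p := x p)) j)) :> inverse (sqrt u0) / 2"
    using DERIV_real_sqrt[OF u0] by (simp add: u0_def CM_def)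
  note D3 = DERIV_compose_FDERIV[OF sq D2]
  have fin: "(\<lambda>h. (c / 2^j) * (\<Sum>a<N. \<Sum>b<N. f' a b h * cofactor CM a b) * (inverse (sqrt u0) / 2))
     = (\<lambda>h. ((-1)^(j+1) / 2^j) / content_gamma x j *
        (\<Sum>m\<in>{1..j+1} - {p}. adj_mat (cayley_menger x j) $$ (p, m) * ((2 *\<^sub>R (x p - x m)) \<bullet> h)))"
  proof (rule ext)
    fix h
    show "(c / 2^j) * (\<Sum>a<N. \<Sum>b<N. f' a b h * cofactor CM a b) * (inverse (sqrt u0) / 2)
      = ((-1)^(j+1) / 2^j) / content_gamma x j *
        (\<Sum>m\<in>{1..j+1} - {p}. adj_mat (cayley_menger x j) $$ (p, m) * ((2 *\<^sub>R (x p - x m)) \<bullet> h))"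
      unfolding sumeq unfolding gam c_def I_def CM_def by (rule alg_aux)
  qed
  have gy': "(\<lambda>y. content_gamma (x(p := y)) j) = (\<lambda>y. sqrt ((c / 2^j) * det (cayley_menger (x(p := y)) j)))"
    using gy by (rule ext)
  show ?thesis
    unfolding gy' by (rule has_derivative_eq_rhs[OF D3 fin])
qed

theorem proposition2:
  fixes x :: "nat \<Rightarrow> 'a::euclidean_space" and k :: 'a and \<rho> :: real and j p :: nat
  assumes "1 \<le> j" and "j \<le> DIM('a)"
    and "inj_on x {1..j+1}" and "\<not> affine_dependent (x ` {1..j+1})"
    and "inj_on (sig k x) {1..j+1}"
    and "p \<in> {1..j+1}"
  shows "((\<lambda>y. simplex_FT \<rho> k (x(p := y)) j) has_derivative
      (\<lambda>h. complex_of_real \<rho> * \<i>^j *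
        ( (complex_of_real (content_gamma x j) *
              (- \<i> * S_term k x j p
               + (\<Sum>t\<in>{1..j+1} - {p}. (S_term k x j t + S_term k x j p)
                                           / complex_of_real (sig k x t - sig k x p))))
            * complex_of_real (k \<bullet> h)
        + (complex_of_real (((-1)^(j+1) / 2^j) / content_gamma x j) * S_sum k x j)
            * complex_of_real (\<Sum>m\<in>{1..j+1} - {p}.
                 adj_mat (cayley_menger x j) $$ (p, m) * ((2 *\<^sub>R (x p - x m)) \<bullet> h)))))
     (at (x p))"
proof -
  let ?C = "complex_of_real \<rho> * \<i>^j"
  let ?g = "\<lambda>y. content_gamma (x(p := y)) j"
  let ?S = "\<lambda>y. S_sum k (x(p := y)) j"
  let ?g' = "\<lambda>h. ((-1)^(j+1) / 2^j) / content_gamma x j *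
        (\<Sum>m\<in>{1..j+1} - {p}. adj_mat (cayley_menger x j) $$ (p, m) * ((2 *\<^sub>R (x p - x m)) \<bullet> h))"
  let ?S' = "\<lambda>h. (- \<i> * S_term k x j p
               + (\<Sum>t\<in>{1..j+1} - {p}. (S_term k x j t + S_term k x j p)
                                           / complex_of_real (sig k x t - sig k x p))) * complex_of_real (k \<bullet> h)"
  have Dg: "(?g has_derivative ?g') (at (x p))" by (rule gamma_deriv[OF assms(3,4,6)])
  have DS: "(?S has_derivative ?S') (at (x p))" by (rule S_deriv[OF assms(5,6)])
  have Dg': "((\<lambda>y. complex_of_real (?g y)) has_derivative (\<lambda>h. complex_of_real (?g' h))) (at (x p))"
    by (rule has_derivative_of_real[OF Dg])
  have DP: "((\<lambda>y. complex_of_real (?g y) * ?S y) has_derivative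
      (\<lambda>h. complex_of_real (?g (x p)) * ?S' h + complex_of_real (?g' h) * ?S (x p))) (at (x p))"
    by (rule has_derivative_mult[OF Dg' DS])
  have DF: "((\<lambda>y. ?C * (complex_of_real (?g y) * ?S y)) has_derivative
      (\<lambda>h. ?C * (complex_of_real (?g (x p)) * ?S' h + complex_of_real (?g' h) * ?S (x p)))) (at (x p))"
    by (rule has_derivative_mult_right[OF DP])
  have feq: "(\<lambda>y. simplex_FT \<rho> k (x(p := y)) j) = (\<lambda>y. ?C * (complex_of_real (?g y) * ?S y))"
    by (rule ext) (simp add: simplex_FT_def mult_ac)
  show ?thesis
    unfolding feq
  proof (rule has_derivative_eq_rhs[OF DF], rule ext)
    fix h
    show "?C * (complex_of_real (?g (x p)) * ?S' h + complex_of_real (?g' h) * ?S (x p)) =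
      complex_of_real \<rho> * \<i>^j *
        ( (complex_of_real (content_gamma x j) *
              (- \<i> * S_term k x j p
               + (\<Sum>t\<in>{1..j+1} - {p}. (S_term k x j t + S_term k x j p)
                                           / complex_of_real (sig k x t - sig k x p))))
            * complex_of_real (k \<bullet> h)
        + (complex_of_real (((-1)^(j+1) / 2^j) / content_gamma x j) * S_sum k x j)
            * complex_of_real (\<Sum>m\<in>{1..j+1} - {p}.
                 adj_mat (cayley_menger x j) $$ (p, m) * ((2 *\<^sub>R (x p - x m)) \<bullet> h)))"
      by (simp only: fun_upd_triv of_real_mult mult_ac)
  qed
qed

end
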